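(* If $\mathcal O\subseteq\mathbb F$ is regular, then there are finitely many $\approx_{\mathcal O}$-equivalence classes on $\mathbb F$, and each of these classes is a regular subset of $\mathbb F$.
   Context: Fix a type $\sigma$ (finite set of relation symbols with arities). $\mathrm{Inc}(\mathbf A)$ of a $\sigma$-structure $\mathbf A$ is the bipartite multigraph with parts $V(\mathbf A)$ and the blocks $(R,(x_1,\dots,x_r))$, $(x_1,\dots,x_r)\in R(\mathbf A)$, with one edge joining $x_i$ to the block for each $i$; $\mathbf A$ is a $\sigma$-forest if $\mathrm{Inc}(\mathbf A)$ has no cycles or parallel edges. $\mathbb F$ is the set of isomorphism classes of $\sigma$-forests, $\mathbb F_{\mathrm r}$ that of rooted $\sigma$-forests. $(\mathbf A,a)+(\mathbf B,b)$: disjoint union with $a,b$ identified as new root; $[(\mathbf A,a)]$ forgets the root. $\mathcal O\subseteq\mathbb F$ is regular if there are only finitely many distinct sets $\mathcal O-(\mathbf A,a)=\{(\mathbf B,b)\in\mathbb F_{\mathrm r}:[(\mathbf A,a)+(\mathbf B,b)]\in\mathcal O\}$. For unrooted forests, $\mathbf A+\mathbf B$ is disjoint union, $\mathcal O-\mathbf A=\{\mathbf B\in\mathbb F:\mathbf A+\mathbf B\in\mathcal O\}$, and $\mathbf A\approx_{\mathcal O}\mathbf A'$ iff $\mathcal O-\mathbf A=\mathcal O-\mathbf A'$. *)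

theory Defs
  imports Main
begin

text \<open>A sigma-structure over the fixed vertex universe nat. The type sigma is
  given by a finite type 'r of relation symbols together with an arity function
  ar :: 'r => nat. Tuples are lists.\<close>

record 'r struct =
  verts :: "nat set"
  rels  :: "'r \<Rightarrow> nat list set"

definition wf_struct :: "('r \<Rightarrow> nat) \<Rightarrow> 'r struct \<Rightarrow> bool" where
  "wf_struct ar A \<longleftrightarrow> finite (verts A) \<and>
     (\<forall>R. \<forall>t\<in>rels A R. length t = ar R \<and> set t \<subseteq> verts A)"

text \<open>Nodes of the incidence graph: vertices (Inl) and blocks (Inr (R, tuple)).\<close>

definition inc_adj :: "'r struct \<Rightarrow> (nat + ('r \<times> nat list)) \<Rightarrow> (nat + ('r \<times> nat list)) \<Rightarrow> bool" where
  "inc_adj A u w \<longleftrightarrow>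
     (\<exists>x R t. t \<in> rels A R \<and> x \<in> set t \<and>
        ((u = Inl x \<and> w = Inr (R, t)) \<or> (u = Inr (R, t) \<and> w = Inl x)))"

definition inc_has_cycle :: "'r struct \<Rightarrow> bool" where
  "inc_has_cycle A \<longleftrightarrow>
     (\<exists>cs. length cs \<ge> 3 \<and> distinct cs \<and>
        (\<forall>i. Suc i < length cs \<longrightarrow> inc_adj A (cs ! i) (cs ! Suc i)) \<and>
        inc_adj A (last cs) (hd cs))"

text \<open>Parallel edges in the incidence multigraph arise exactly from tuples with
  a repeated entry.\<close>

definition forest :: "('r \<Rightarrow> nat) \<Rightarrow> 'r struct \<Rightarrow> bool" where
  "forest ar A \<longleftrightarrow> wf_struct ar A \<and> (\<forall>R. \<forall>t\<in>rels A R. distinct t) \<and> \<not> inc_has_cycle A"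

definition rooted_forest :: "('r \<Rightarrow> nat) \<Rightarrow> 'r struct \<Rightarrow> nat \<Rightarrow> bool" where
  "rooted_forest ar A a \<longleftrightarrow> forest ar A \<and> a \<in> verts A"

definition struct_iso :: "'r struct \<Rightarrow> 'r struct \<Rightarrow> bool" where
  "struct_iso A B \<longleftrightarrow> (\<exists>f. bij_betw f (verts A) (verts B) \<and>
      (\<forall>R. rels B R = map f ` rels A R))"

definition dunion :: "'r struct \<Rightarrow> 'r struct \<Rightarrow> 'r struct" where
  "dunion A B = \<lparr> verts = (\<lambda>x. 2 * x) ` verts A \<union> (\<lambda>y. 2 * y + 1) ` verts B,
                  rels = (\<lambda>R. map (\<lambda>x. 2 * x) ` rels A R \<union> map (\<lambda>y. 2 * y + 1) ` rels B R) \<rparr>"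

text \<open>[(A,a) + (B,b)]: disjoint union with a and b identified (root forgotten).\<close>

definition glue :: "'r struct \<Rightarrow> nat \<Rightarrow> 'r struct \<Rightarrow> nat \<Rightarrow> 'r struct" where
  "glue A a B b = (let g = (\<lambda>y. if y = b then 2 * a else 2 * y + 1) in
     \<lparr> verts = (\<lambda>x. 2 * x) ` verts A \<union> g ` verts B,
       rels = (\<lambda>R. map (\<lambda>x. 2 * x) ` rels A R \<union> map g ` rels B R) \<rparr>)"

text \<open>A set of (iso classes of) sigma-forests, represented as an
  isomorphism-closed set of concrete forests.\<close>

definition forest_class_set :: "('r \<Rightarrow> nat) \<Rightarrow> 'r struct set \<Rightarrow> bool" where
  "forest_class_set ar Ob \<longleftrightarrow> (\<forall>A\<in>Ob. forest ar A) \<and>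
     (\<forall>A B. A \<in> Ob \<longrightarrow> wf_struct ar B \<longrightarrow> struct_iso A B \<longrightarrow> B \<in> Ob)"

definition rooted_residual :: "('r \<Rightarrow> nat) \<Rightarrow> 'r struct set \<Rightarrow> 'r struct \<Rightarrow> nat \<Rightarrow> ('r struct \<times> nat) set" where
  "rooted_residual ar Ob A a = {(B, b). rooted_forest ar B b \<and> glue A a B b \<in> Ob}"

definition regular :: "('r \<Rightarrow> nat) \<Rightarrow> 'r struct set \<Rightarrow> bool" where
  "regular ar Ob \<longleftrightarrow>
     finite ((\<lambda>(A, a). rooted_residual ar Ob A a) ` {(A, a). rooted_forest ar A a})"

definition residual :: "('r \<Rightarrow> nat) \<Rightarrow> 'r struct set \<Rightarrow> 'r struct \<Rightarrow> 'r struct set" where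
  "residual ar Ob A = {B. forest ar B \<and> dunion A B \<in> Ob}"

definition equiv_O :: "('r \<Rightarrow> nat) \<Rightarrow> 'r struct set \<Rightarrow> 'r struct \<Rightarrow> 'r struct \<Rightarrow> bool" where
  "equiv_O ar Ob A A' \<longleftrightarrow> residual ar Ob A = residual ar Ob A'"

definition equiv_O_class :: "('r \<Rightarrow> nat) \<Rightarrow> 'r struct set \<Rightarrow> 'r struct \<Rightarrow> 'r struct set" where
  "equiv_O_class ar Ob A = {A'. forest ar A' \<and> equiv_O ar Ob A A'}"

end

theory Submission
  imports Defs
begin


definition cyc :: "('a \<Rightarrow> 'a \<Rightarrow> bool) \<Rightarrow> 'a list \<Rightarrow> bool" where
  "cyc adj cs \<longleftrightarrow> length cs \<ge> 3 \<and> distinct cs \<and>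
     (\<forall>i < length cs. adj (cs ! i) (cs ! (Suc i mod length cs)))"

lemma inc_has_cycle_cyc: "inc_has_cycle A \<longleftrightarrow> (\<exists>cs. cyc (inc_adj A) cs)"
proof
  assume "inc_has_cycle A"
  then obtain cs where l: "length cs \<ge> 3" "distinct cs"
    and a: "\<forall>i. Suc i < length cs \<longrightarrow> inc_adj A (cs ! i) (cs ! Suc i)"
    and h: "inc_adj A (last cs) (hd cs)" unfolding inc_has_cycle_def by blast
  have "\<forall>i < length cs. inc_adj A (cs ! i) (cs ! (Suc i mod length cs))"
  proof (intro allI impI)
    fix i assume i: "i < length cs"
    show "inc_adj A (cs ! i) (cs ! (Suc i mod length cs))"
    proof (cases "Suc i < length cs")
      case True then show ?thesis using a by simp
    next
      case False
      then have "Suc i = length cs" using i by linarith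
      then have "i = length cs - 1" "Suc i mod length cs = 0" by auto
      moreover have "cs \<noteq> []" using l by auto
      ultimately show ?thesis using h by (simp add: last_conv_nth hd_conv_nth)
    qed
  qed
  then show "\<exists>cs. cyc (inc_adj A) cs" using l unfolding cyc_def by blast
next
  assume "\<exists>cs. cyc (inc_adj A) cs"
  then obtain cs where l: "length cs \<ge> 3" "distinct cs"
    and a: "\<forall>i < length cs. inc_adj A (cs ! i) (cs ! (Suc i mod length cs))"
    unfolding cyc_def by blast
  have "\<forall>i. Suc i < length cs \<longrightarrow> inc_adj A (cs ! i) (cs ! Suc i)"
    using a by (metis Suc_lessD mod_less)
  moreover have "inc_adj A (last cs) (hd cs)"
  proof -
    have ne: "cs \<noteq> []" using l by auto
    have e: "Suc (length cs - 1) = length cs" using l by linarith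
    have "length cs - 1 < length cs" "Suc (length cs - 1) mod length cs = 0" using l e by auto
    then show ?thesis using a ne by (metis last_conv_nth hd_conv_nth)
  qed
  ultimately show "inc_has_cycle A" using l unfolding inc_has_cycle_def by blast
qed

lemma cyc_rotate: assumes "cyc adj cs" shows "cyc adj (rotate k cs)"
proof -
  let ?n = "length cs"
  have n: "?n \<ge> 3" "distinct cs" and a: "\<forall>i < ?n. adj (cs ! i) (cs ! (Suc i mod ?n))"
    using assms unfolding cyc_def by auto
  have "\<forall>i < ?n. adj (rotate k cs ! i) (rotate k cs ! (Suc i mod ?n))"
  proof (intro allI impI)
    fix i assume i: "i < ?n"
    have pos: "0 < ?n" using n by linarith
    have 1: "rotate k cs ! i = cs ! ((k + i) mod ?n)" using i by (simp add: nth_rotate)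
    have 2: "rotate k cs ! (Suc i mod ?n) = cs ! ((k + Suc i mod ?n) mod ?n)"
      using pos by (simp add: nth_rotate)
    have 3: "(k + Suc i mod ?n) mod ?n = Suc ((k + i) mod ?n) mod ?n"
      by (metis add_Suc_right mod_Suc_eq mod_add_right_eq)
    have "(k+i) mod ?n < ?n" using pos by simp
    then show "adj (rotate k cs ! i) (rotate k cs ! (Suc i mod ?n))"
      using a 1 2 3 by metis
  qed
  then show ?thesis using n unfolding cyc_def by simp
qed

lemma cyc_map: assumes "cyc adjX cs" "inj_on H (set cs)"
  "\<And>x y. x \<in> set cs \<Longrightarrow> y \<in> set cs \<Longrightarrow> adjX x y \<Longrightarrow> adjY (H x) (H y)"
  shows "cyc adjY (map H cs)"
proof -
  have n: "length cs \<ge> 3" "distinct cs" and a: "\<forall>i < length cs. adjX (cs ! i) (cs ! (Suc i mod length cs))"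
    using assms unfolding cyc_def by auto
  have "\<forall>i < length cs. adjY (map H cs ! i) (map H cs ! (Suc i mod length cs))"
  proof (intro allI impI)
    fix i assume i: "i < length cs"
    have pos: "0 < length cs" using n by linarith
    have "Suc i mod length cs < length cs" using pos by simp
    then show "adjY (map H cs ! i) (map H cs ! (Suc i mod length cs))"
      using assms(3) a i by (simp add: nth_mem)
  qed
  then show ?thesis using n assms(2) unfolding cyc_def by (simp add: distinct_map)
qed

lemma cyc_nbrs: assumes "cyc adj cs" "x \<in> set cs"
  shows "\<exists>y z. y \<in> set cs \<and> z \<in> set cs \<and> y \<noteq> z \<and> adj y x \<and> adj x z"
proof -
  let ?n = "length cs"
  have n: "?n \<ge> 3" "distinct cs" and a: "\<forall>i < ?n. adj (cs ! i) (cs ! (Suc i mod ?n))"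
    using assms unfolding cyc_def by auto
  obtain k where k: "k < ?n" "cs ! k = x" using assms(2) by (metis in_set_conv_nth)
  define j where "j = (if k = 0 then ?n - 1 else k - 1)"
  have j: "j < ?n" "Suc j mod ?n = k" using k n unfolding j_def by auto
  have pos: "0 < ?n" using n by linarith
  have s: "Suc k mod ?n < ?n" using pos by simp
  have ne: "j \<noteq> Suc k mod ?n"
  proof (cases "Suc k < ?n")
    case True then show ?thesis using n unfolding j_def by auto
  next
    case False then have "Suc k = ?n" using k by linarith
    then have "Suc k mod ?n = 0" "k \<noteq> 0" using n by auto
    then have "j = k - 1" unfolding j_def by simp
    then show ?thesis using n \<open>Suc k = ?n\<close> \<open>Suc k mod ?n = 0\<close> by linarith
  qed
  have "cs ! j \<noteq> cs ! (Suc k mod ?n)" using ne j s n by (simp add: nth_eq_iff_index_eq)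
  moreover have "adj (cs ! j) (cs ! (Suc j mod ?n))" using a j(1) by blast
  then have "adj (cs ! j) x" using j k by simp
  moreover have "adj (cs ! k) (cs ! (Suc k mod ?n))" using a k(1) by blast
  then have "adj x (cs ! (Suc k mod ?n))" using k by simp
  moreover have "cs ! j \<in> set cs" "cs ! (Suc k mod ?n) \<in> set cs" using j s nth_mem by auto
  ultimately show ?thesis by blast
qed

lemma cyc_cut: assumes "cyc adj cs"
  and S: "\<And>x y. x \<in> set cs \<Longrightarrow> y \<in> set cs \<Longrightarrow> adj x y \<Longrightarrow> x \<noteq> c \<Longrightarrow> y \<noteq> c \<Longrightarrow> S x = S y"
  shows "\<exists>s. \<forall>x\<in>set cs. x \<noteq> c \<longrightarrow> S x = s"
proof -
  let ?n = "length cs"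
  obtain k where kk: "c \<in> set cs \<Longrightarrow> k < ?n \<and> cs ! k = c"
    by (metis in_set_conv_nth)
  define cs' where "cs' = rotate k cs"
  have cy: "cyc adj cs'" unfolding cs'_def using assms(1) by (rule cyc_rotate)
  have st: "set cs' = set cs" and ln: "length cs' = ?n" unfolding cs'_def by auto
  have n: "?n \<ge> 3" "distinct cs'" and a: "\<forall>i < ?n. adj (cs' ! i) (cs' ! (Suc i mod ?n))"
    using cy ln unfolding cyc_def by auto
  have pos: "0 < ?n" using n by linarith
  have c0: "c \<in> set cs \<Longrightarrow> cs' ! 0 = c" using kk pos nth_rotate[of 0 cs k] unfolding cs'_def
    by simp
  have nc: "\<And>j. 0 < j \<Longrightarrow> j < ?n \<Longrightarrow> cs' ! j \<noteq> c"
  proof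
    fix j assume j: "0 < j" "j < ?n" "cs' ! j = c"
    then have "c \<in> set cs" using st ln by (metis nth_mem)
    then have "cs' ! 0 = cs' ! j" using c0 j by simp
    moreover have "0 < length cs'" "j < length cs'" using j ln by auto
    ultimately show False using j n nth_eq_iff_index_eq[of cs' 0 j] by simp
  qed
  have mem: "\<And>j. j < ?n \<Longrightarrow> cs' ! j \<in> set cs" using st ln by (metis nth_mem)
  have ind: "\<forall>j. 0 < j \<longrightarrow> j < ?n \<longrightarrow> S (cs' ! j) = S (cs' ! 1)"
  proof (intro allI)
    fix j show "0 < j \<longrightarrow> j < ?n \<longrightarrow> S (cs' ! j) = S (cs' ! 1)"
    proof (induction j)
      case 0 then show ?case by simp
    next
      case (Suc j)
      show ?case
      proof (cases "j = 0")
        case True then show ?thesis by simp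
      next
        case False
        show ?thesis
        proof (intro impI)
          assume "Suc j < ?n"
          then have "adj (cs' ! j) (cs' ! Suc j)" using a by (metis Suc_lessD mod_less)
          moreover have "j < ?n" using \<open>Suc j < ?n\<close> by simp
          ultimately have "S (cs' ! j) = S (cs' ! Suc j)"
            using S[OF mem[of j] mem[of "Suc j"]] nc[of j] nc[of "Suc j"] False \<open>Suc j < ?n\<close> by simp
          then show "S (cs' ! Suc j) = S (cs' ! 1)" using Suc False \<open>Suc j < ?n\<close> by simp
        qed
      qed
    qed
  qed
  have "\<forall>x\<in>set cs. x \<noteq> c \<longrightarrow> S x = S (cs' ! 1)"
  proof (intro ballI impI)
    fix x assume x: "x \<in> set cs" "x \<noteq> c"
    then have "x \<in> set cs'" using st by simp
    then obtain j where j0: "j < length cs'" "cs' ! j = x" by (auto simp: in_set_conv_nth)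
    then have j: "j < ?n" "cs' ! j = x" using ln by auto
    show "S x = S (cs' ! 1)"
    proof (cases "j = 0")
      case False
      then have "0 < j" by simp
      then have "S (cs' ! j) = S (cs' ! 1)" using ind j(1) by blast
      then show ?thesis using j(2) by simp
    next
      case True
      have o: "(1::nat) < ?n" using n by linarith
      have "adj (cs' ! 0) (cs' ! (Suc 0 mod ?n))" using a pos by blast
      then have ad: "adj (cs' ! 0) (cs' ! 1)" using o by simp
      have "cs' ! 1 \<noteq> c" using nc o by simp
      then have "S (cs' ! 0) = S (cs' ! 1)" using S[OF mem[OF pos] mem[OF o] ad] x j True by simp
      then show ?thesis using j True by simp
    qed
  qed
  then show ?thesis by blast
qed




definition gB :: "nat \<Rightarrow> nat \<Rightarrow> nat \<Rightarrow> nat" where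
  "gB a b y = (if y = b then 2*a else 2*y+1)"

lemma inj_gB: "inj (gB a b)"
proof (rule injI)
  fix x y assume "gB a b x = gB a b y"
  then show "x = y" unfolding gB_def by (cases "x = b"; cases "y = b") presburger+
qed

lemma inj_double: "inj (\<lambda>x::nat. 2*x)" by (auto simp: inj_on_def)

lemma verts_glue: "verts (glue A a B b) = (\<lambda>x. 2*x) ` verts A \<union> gB a b ` verts B"
  by (simp add: glue_def Let_def gB_def[abs_def])

lemma rels_glue: "rels (glue A a B b) R = map (\<lambda>x. 2*x) ` rels A R \<union> map (gB a b) ` rels B R"
  by (simp add: glue_def Let_def gB_def[abs_def])

lemma inc_adj_sym: "inc_adj X x y \<longleftrightarrow> inc_adj X y x"
  unfolding inc_adj_def by blast

lemma inc_adj_Inr: "inc_adj X (Inr (R,u)) z \<Longrightarrow> u \<in> rels X R \<and> (\<exists>v. z = Inl v \<and> v \<in> set u)"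
  unfolding inc_adj_def by blast

lemma inc_adj_Inl: "inc_adj X (Inl v) z \<Longrightarrow> \<exists>R u. z = Inr (R,u) \<and> u \<in> rels X R \<and> v \<in> set u"
  unfolding inc_adj_def by blast

lemma cyc_pull:
  fixes X Y :: "'r struct"
  assumes cy: "cyc (inc_adj X) cs" and f: "inj f"
  and F: "\<And>x. x \<in> set cs \<Longrightarrow> (\<exists>y. x = Inl (f y)) \<or> (\<exists>R t. t \<in> rels Y R \<and> x = Inr (R, map f t))"
  shows "inc_has_cycle Y"
proof -
  define H :: "nat + ('r \<times> nat list) \<Rightarrow> nat + ('r \<times> nat list)"
    where "H = case_sum (\<lambda>v. Inl (inv f v)) (\<lambda>(R,u). Inr (R, map (inv f) u))"
  have Hl: "H (Inl (f y)) = Inl y" for y using f by (simp add: H_def)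
  have Hr: "H (Inr (R, map f t)) = Inr (R, t)" for R t using f by (simp add: H_def comp_def)
  define G :: "nat + ('r \<times> nat list) \<Rightarrow> nat + ('r \<times> nat list)"
    where "G = case_sum (\<lambda>v. Inl (f v)) (\<lambda>(R,u). Inr (R, map f u))"
  have GH: "G (H x) = x" if x: "x \<in> set cs" for x
    using F[OF x] by (elim disjE exE conjE) (simp_all add: Hl Hr G_def)
  have inj: "inj_on H (set cs)"
    by (rule inj_on_inverseI[where g = G]) (rule GH)
  have key: "y1 \<in> set t" if "f y1 \<in> set (map f t)" for y1 t
    using that f by (auto simp: inj_image_mem_iff)
  have adj: "inc_adj Y (H x) (H y)" if x: "x \<in> set cs" and y: "y \<in> set cs" and a: "inc_adj X x y" for x y
  proof -
    have gen: "inc_adj Y (H x) (H y)" if x: "x \<in> set cs" and y: "y \<in> set cs" and a: "inc_adj X x y"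
      and xl: "\<exists>v. x = Inl v" for x y
    proof -
      obtain v where v: "x = Inl v" using xl by blast
      obtain R u where u: "y = Inr (R,u)" "v \<in> set u" using inc_adj_Inl[OF a[unfolded v]] by blast
      have "\<not>(\<exists>R t. t \<in> rels Y R \<and> x = Inr (R, map f t))" using v by simp
      then obtain y1 where y1: "x = Inl (f y1)" using F[OF x] by blast
      have "\<not>(\<exists>y'. y = Inl (f y'))" using u by simp
      then obtain R' t where t0: "t \<in> rels Y R'" "y = Inr (R', map f t)" using F[OF y] by blast
      then have t: "t \<in> rels Y R" "u = map f t" using u by auto
      have "v = f y1" using v y1 by simp
      then have "f y1 \<in> set (map f t)" using u(2) t(2) by simp
      then have "y1 \<in> set t" by (rule key)
      then show ?thesis using y1 u t Hl Hr unfolding inc_adj_def by fastforce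
    qed
    show ?thesis
    proof (cases x)
      case (Inl v) then show ?thesis using gen x y a by blast
    next
      case (Inr p)
      then obtain R u where "x = Inr (R,u)" by (cases p) auto
      then obtain v where "y = Inl v" using inc_adj_Inr[of X R u y] a by auto
      then have "inc_adj Y (H y) (H x)" using gen[OF y x] a inc_adj_sym by blast
      then show ?thesis using inc_adj_sym by blast
    qed
  qed
  have "cyc (inc_adj Y) (map H cs)" using cyc_map[OF cy inj] adj by blast
  then show ?thesis using inc_has_cycle_cyc by blast
qed

lemma glue_blocks:
  "u \<in> rels (glue A a B b) R \<Longrightarrow>
    (\<exists>t. t \<in> rels A R \<and> u = map (\<lambda>x. 2*x) t) \<or> (\<exists>t. t \<in> rels B R \<and> u = map (gB a b) t)"
  by (auto simp: rels_glue)

lemma gB_ents: "v \<in> set (map (gB a b) t) \<Longrightarrow> v = 2*a \<or> odd v"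
  by (auto simp: gB_def)

lemma glue_nocycle:
  fixes A B :: "'r struct"
  assumes nA: "\<not> inc_has_cycle A" and nB: "\<not> inc_has_cycle B"
  shows "\<not> inc_has_cycle (glue A a B b)"
proof
  let ?G = "glue A a B b"
  assume "inc_has_cycle ?G"
  then obtain cs where cy: "cyc (inc_adj ?G) cs" using inc_has_cycle_cyc by blast
  define S :: "nat + ('r \<times> nat list) \<Rightarrow> bool" where "S = case_sum odd (\<lambda>(R,u). \<exists>v\<in>set u. odd v)"
  define c :: "nat + ('r \<times> nat list)" where "c = Inl (2*a)"
  have SI: "S (Inl v) = odd v" for v by (simp add: S_def)
  have SR: "S (Inr (R,u)) = (\<exists>v\<in>set u. odd v)" for R u by (simp add: S_def)
  have oddv: "odd v = (\<exists>w\<in>set u. odd w)" if u: "u \<in> rels ?G R" "v \<in> set u" "v \<noteq> 2*a" for u R v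
  proof -
    from glue_blocks[OF u(1)] show ?thesis
    proof
      assume "\<exists>t. t \<in> rels A R \<and> u = map (\<lambda>x. 2*x) t"
      then obtain t where "u = map (\<lambda>x. 2*x) t" by blast
      then have "\<forall>w\<in>set u. even w" by auto
      then show ?thesis using u(2) by blast
    next
      assume "\<exists>t. t \<in> rels B R \<and> u = map (gB a b) t"
      then obtain t where "u = map (gB a b) t" by blast
      then have "odd v" using gB_ents u(2,3) by blast
      then show ?thesis using u(2) by blast
    qed
  qed
  have Sprop: "S x = S y" if "x \<in> set cs" "y \<in> set cs" and ad: "inc_adj ?G x y" and xc: "x \<noteq> c" and yc: "y \<noteq> c" for x y
  proof -
    obtain v R u where u: "u \<in> rels ?G R" "v \<in> set u"
      and xy: "(x = Inl v \<and> y = Inr (R,u)) \<or> (x = Inr (R,u) \<and> y = Inl v)"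
      using ad unfolding inc_adj_def by blast
    have "v \<noteq> 2*a" using xy xc yc unfolding c_def by auto
    then have "odd v = (\<exists>w\<in>set u. odd w)" using oddv u by blast
    then show ?thesis using xy SI SR by auto
  qed
  obtain s where s: "\<forall>x\<in>set cs. x \<noteq> c \<longrightarrow> S x = s"
    using cyc_cut[where c=c and S=S, OF cy Sprop] by blast
  have blockrel: "u \<in> rels ?G R" if xin: "Inr (R,u) \<in> set cs" for R u
  proof -
    obtain y z where "inc_adj ?G (Inr (R,u)) z" using cyc_nbrs[OF cy xin] by blast
    from inc_adj_Inr[OF this] show ?thesis by blast
  qed
  show False
  proof (cases s)
    case True
    have "inc_has_cycle B"
    proof (rule cyc_pull[OF cy inj_gB])
      fix x assume x: "x \<in> set cs"
      show "(\<exists>y. x = Inl (gB a b y)) \<or> (\<exists>R t. t \<in> rels B R \<and> x = Inr (R, map (gB a b) t))"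
      proof (cases x)
        case (Inl v)
        show ?thesis
        proof (cases "x = c")
          case True then have "x = Inl (gB a b b)" by (simp add: c_def gB_def)
          then show ?thesis by blast
        next
          case False
          then have "S x" using s x \<open>s\<close> by blast
          then have ov: "odd v" using Inl SI by simp
          obtain y z where "inc_adj ?G x z" using cyc_nbrs[OF cy x] by blast
          then obtain R u where u: "u \<in> rels ?G R" "v \<in> set u" using inc_adj_Inl Inl by blast
          from glue_blocks[OF u(1)] show ?thesis
          proof
            assume "\<exists>t. t \<in> rels A R \<and> u = map (\<lambda>x. 2*x) t"
            then obtain t where "u = map (\<lambda>x. 2*x) t" by blast
            then have "even v" using u(2) by auto
            then show ?thesis using ov by simp
          next
            assume "\<exists>t. t \<in> rels B R \<and> u = map (gB a b) t"
            then obtain t where "u = map (gB a b) t" by blast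
            then obtain y0 where "v = gB a b y0" using u(2) by auto
            then show ?thesis using Inl by blast
          qed
        qed
      next
        case (Inr p)
        then obtain R u where xe: "x = Inr (R,u)" by (cases p) auto
        then have "x \<noteq> c" unfolding c_def by simp
        then have "S x" using s x \<open>s\<close> by blast
        then obtain w where w: "w \<in> set u" "odd w" using xe SR by auto
        have u: "u \<in> rels ?G R" using blockrel x xe by blast
        from glue_blocks[OF u] show ?thesis
        proof
          assume "\<exists>t. t \<in> rels A R \<and> u = map (\<lambda>x. 2*x) t"
          then obtain t where "u = map (\<lambda>x. 2*x) t" by blast
          then have "even w" using w(1) by auto
          then show ?thesis using w(2) by simp
        next
          assume "\<exists>t. t \<in> rels B R \<and> u = map (gB a b) t"
          then show ?thesis using xe by blast
        qed
      qed
    qed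
    then show False using nB by simp
  next
    case False
    have "inc_has_cycle A"
    proof (rule cyc_pull[OF cy inj_double])
      fix x assume x: "x \<in> set cs"
      show "(\<exists>y. x = Inl (2 * y)) \<or> (\<exists>R t. t \<in> rels A R \<and> x = Inr (R, map (\<lambda>x. 2*x) t))"
      proof (cases x)
        case (Inl v)
        show ?thesis
        proof (cases "x = c")
          case True then have "x = Inl (2 * a)" by (simp add: c_def)
          then show ?thesis by blast
        next
          case False
          then have "\<not> S x" using s x \<open>\<not> s\<close> by blast
          then have "even v" using Inl SI by simp
          then have "v = 2 * (v div 2)" by simp
          then show ?thesis using Inl by blast
        qed
      next
        case (Inr p)
        then obtain R u where xe: "x = Inr (R,u)" by (cases p) auto
        then have "x \<noteq> c" unfolding c_def by simp
        then have "\<not> S x" using s x \<open>\<not> s\<close> by blast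
        then have ev: "\<forall>w\<in>set u. even w" using xe SR by auto
        have u: "u \<in> rels ?G R" using blockrel x xe by blast
        from glue_blocks[OF u] show ?thesis
        proof
          assume "\<exists>t. t \<in> rels A R \<and> u = map (\<lambda>x. 2*x) t"
          then show ?thesis using xe by blast
        next
          assume "\<exists>t. t \<in> rels B R \<and> u = map (gB a b) t"
          then obtain t where "u = map (gB a b) t" by blast
          then have all: "\<forall>w\<in>set u. w = 2*a" using ev gB_ents by blast
          obtain y z where yz: "y \<in> set cs" "z \<in> set cs" "y \<noteq> z" "inc_adj ?G y x" "inc_adj ?G x z"
            using cyc_nbrs[OF cy x] by blast
          have "inc_adj ?G x y" using yz(4) inc_adj_sym by blast
          then have "inc_adj ?G (Inr (R,u)) y" using xe by simp
          from inc_adj_Inr[OF this] obtain vy where vy: "y = Inl vy" "vy \<in> set u" by blast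
          have "inc_adj ?G (Inr (R,u)) z" using yz(5) xe by simp
          from inc_adj_Inr[OF this] obtain vz where vz: "z = Inl vz" "vz \<in> set u" by blast
          have "vy = vz" using all vy(2) vz(2) by metis
          then show ?thesis using vy(1) vz(1) yz(3) by simp
        qed
      qed
    qed
    then show False using nA by simp
  qed
qed




lemma wf_glue: "wf_struct ar A \<Longrightarrow> wf_struct ar B \<Longrightarrow> wf_struct ar (glue A a B b)"
  unfolding wf_struct_def verts_glue rels_glue by (auto, blast+)

lemma distinct_glue: "(\<forall>R. \<forall>t\<in>rels A R. distinct t) \<Longrightarrow> (\<forall>R. \<forall>t\<in>rels B R. distinct t) \<Longrightarrow>
   \<forall>R. \<forall>t\<in>rels (glue A a B b) R. distinct t"
  unfolding rels_glue using inj_gB[of a b] inj_double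
  by (auto simp: distinct_map intro!: inj_on_subset[OF _ subset_UNIV])

lemma forest_glue: "forest ar A \<Longrightarrow> forest ar B \<Longrightarrow> forest ar (glue A a B b)"
  unfolding forest_def using wf_glue distinct_glue glue_nocycle by metis

lemma verts_dunion: "verts (dunion A B) = (\<lambda>x. 2*x) ` verts A \<union> (\<lambda>y. 2*y+1) ` verts B"
  by (simp add: dunion_def)

lemma rels_dunion: "rels (dunion A B) R = map (\<lambda>x. 2*x) ` rels A R \<union> map (\<lambda>y. 2*y+1) ` rels B R"
  by (simp add: dunion_def)

lemma wf_dunion: "wf_struct ar A \<Longrightarrow> wf_struct ar B \<Longrightarrow> wf_struct ar (dunion A B)"
  unfolding wf_struct_def verts_dunion rels_dunion by (auto, blast+)

definition extv :: "'r struct \<Rightarrow> nat \<Rightarrow> 'r struct" where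
  "extv B b0 = B\<lparr>verts := insert b0 (verts B)\<rparr>"

lemma forest_ext: "forest ar B \<Longrightarrow> forest ar (extv B b0)"
proof -
  assume f: "forest ar B"
  have "inc_adj (extv B b0) = inc_adj B" by (rule ext, rule ext) (simp add: inc_adj_def extv_def)
  then have "inc_has_cycle (extv B b0) = inc_has_cycle B" by (simp add: inc_has_cycle_def)
  moreover have "wf_struct ar (extv B b0)" using f unfolding forest_def wf_struct_def extv_def by auto
  ultimately show ?thesis using f unfolding forest_def by (simp add: extv_def)
qed

lemma glue_ext: assumes "a \<in> verts A" "wf_struct ar B" "b0 \<notin> verts B"
  shows "glue A a (extv B b0) b0 = dunion A B"
proof -
  have g: "gB a b0 y = 2*y+1" if "y \<in> verts B" for y using that assms(3) by (auto simp: gB_def)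
  have v: "verts (glue A a (extv B b0) b0) = verts (dunion A B)"
  proof -
    have "gB a b0 ` verts B = (\<lambda>y. 2*y+1) ` verts B" using g by (rule image_cong[OF refl])
    moreover have "gB a b0 b0 = 2*a" by (simp add: gB_def)
    moreover have "2*a \<in> (\<lambda>x. 2*x) ` verts A" using assms(1) by blast
    ultimately show ?thesis unfolding verts_glue verts_dunion extv_def by auto
  qed
  have r: "rels (glue A a (extv B b0) b0) = rels (dunion A B)"
  proof
    fix R
    have "map (gB a b0) t = map (\<lambda>y. 2*y+1) t" if "t \<in> rels B R" for t
      using that assms(2) g unfolding wf_struct_def by (auto intro!: map_cong)
    then have "map (gB a b0) ` rels B R = map (\<lambda>y. 2*y+1) ` rels B R" by (rule image_cong[OF refl])
    then show "rels (glue A a (extv B b0) b0) R = rels (dunion A B) R"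
      unfolding rels_glue rels_dunion extv_def by simp
  qed
  show ?thesis using v r by (simp add: glue_def dunion_def Let_def)
qed




definition ff :: "nat \<Rightarrow> nat" where
  "ff v = (if 4 dvd v then v else if even v then v div 2 else 2*v)"

lemma inj_ff: "inj ff"
proof (rule inj_on_inverseI[where g = "\<lambda>w. if 4 dvd w then w else if odd w then 2*w else w div 2"])
  fix v :: nat
  show "(if 4 dvd ff v then ff v else if odd (ff v) then 2 * ff v else ff v div 2) = v"
  proof (cases "4 dvd v")
    case True then show ?thesis by (simp add: ff_def)
  next
    case False
    show ?thesis
    proof (cases "even v")
      case True
      then have "ff v = v div 2" using False by (simp add: ff_def)
      moreover have "odd (v div 2)" "\<not> 4 dvd (v div 2)" using True False by presburger+
      ultimately show ?thesis using True by simp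
    next
      case odd: False
      then have "ff v = 2 * v" using False by (simp add: ff_def)
      moreover have "\<not> 4 dvd (2*v)" "even (2*v)" using odd by presburger+
      ultimately show ?thesis by simp
    qed
  qed
qed

lemma ff1: "ff (2*(2*x)) = 2*(2*x)" unfolding ff_def by presburger
lemma ff1': "ff (4*x) = 4*x" unfolding ff_def by presburger
lemma ff3': "ff (Suc (2*x)) = Suc (Suc (4*x))" unfolding ff_def by presburger
lemma ff2: "ff (2*(gB a b y)) = gB (2*a) b y" unfolding ff_def gB_def by presburger
lemma ff3: "ff (2*y+1) = 2*(2*y+1)" unfolding ff_def by presburger

lemma iso_of_inj:
  assumes inj: "inj_on f (verts X)" and v: "verts Y = f ` verts X"
    and r: "\<And>R. rels Y R = map f ` rels X R" and wf: "wf_struct ar X"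
  shows "struct_iso X Y \<and> struct_iso Y X"
proof
  have b: "bij_betw f (verts X) (verts Y)" using inj v by (simp add: inj_on_imp_bij_betw)
  then show "struct_iso X Y" using r unfolding struct_iso_def by blast
  define g where "g = inv_into (verts X) f"
  have bg: "bij_betw g (verts Y) (verts X)" unfolding g_def using b by (rule bij_betw_inv_into)
  have "rels X R = map g ` rels Y R" for R
  proof -
    have "map g (map f t) = t" if "t \<in> rels X R" for t
    proof -
      have "set t \<subseteq> verts X" using wf that unfolding wf_struct_def by blast
      then show ?thesis unfolding g_def using inj by (simp add: map_idI subset_iff)
    qed
    then have "rels X R = (\<lambda>t. map g (map f t)) ` rels X R" by simp
    then show ?thesis using r by (simp add: image_image)
  qed
  then show "struct_iso Y X" using bg unfolding struct_iso_def by blast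
qed

lemma iso_swap:
  fixes A B D :: "'r struct"
  assumes that: "wf_struct ar A" "wf_struct ar B" "wf_struct ar D"
  shows "struct_iso (dunion (glue A a B b) D) (glue (dunion A D) (2*a) B b) \<and>
         struct_iso (glue (dunion A D) (2*a) B b) (dunion (glue A a B b) D)"
proof (rule iso_of_inj[where f = ff])
  show "inj_on ff (verts (dunion (glue A a B b) D))" using inj_ff by (rule inj_on_subset) simp
  show "verts (glue (dunion A D) (2*a) B b) = ff ` verts (dunion (glue A a B b) D)"
    unfolding verts_glue verts_dunion by (simp add: image_Un image_image ff1 ff2 ff3 ff1' ff3' Un_ac)
  show "rels (glue (dunion A D) (2*a) B b) R = map ff ` rels (dunion (glue A a B b) D) R" for R
    unfolding rels_glue rels_dunion by (simp add: image_Un image_image comp_def ff1 ff2 ff3 ff1' ff3' Un_ac)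
  show "wf_struct ar (dunion (glue A a B b) D)" using that by (simp add: wf_dunion wf_glue)
qed




lemma iso_Ob:
  assumes Ob: "forest_class_set ar Ob" and "struct_iso X Y \<and> struct_iso Y X" "wf_struct ar X" "wf_struct ar Y"
  shows "X \<in> Ob \<longleftrightarrow> Y \<in> Ob"
  using assms unfolding forest_class_set_def by blast

lemma forest_dunion: assumes "forest ar A" "a \<in> verts A" "forest ar D" shows "forest ar (dunion A D)"
proof -
  have "finite (verts D)" using assms(3) unfolding forest_def wf_struct_def by blast
  then obtain b0 where b0: "b0 \<notin> verts D" using ex_new_if_finite[OF infinite_UNIV_nat] by blast
  have "wf_struct ar D" using assms(3) unfolding forest_def by blast
  then have "glue A a (extv D b0) b0 = dunion A D" using glue_ext[OF assms(2) _ b0] by blast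
  then show ?thesis using forest_glue[OF assms(1) forest_ext[OF assms(3)]] by metis
qed

lemma swap_Ob:
  assumes Ob: "forest_class_set ar Ob" and A: "forest ar A" and B: "forest ar B" and D: "forest ar D"
  shows "dunion (glue A a B b) D \<in> Ob \<longleftrightarrow> glue (dunion A D) (2*a) B b \<in> Ob"
proof -
  have w: "wf_struct ar A" "wf_struct ar B" "wf_struct ar D" using A B D unfolding forest_def by auto
  show ?thesis by (rule iso_Ob[OF Ob iso_swap[OF w]]) (simp_all add: w wf_dunion wf_glue)
qed

theorem lemma4p4:
  fixes ar :: "'r::finite \<Rightarrow> nat" and Ob :: "'r struct set"
  assumes "forest_class_set ar Ob"
    and "regular ar Ob"
  shows "finite (equiv_O_class ar Ob ` {A. forest ar A}) \<and>
         (\<forall>A. forest ar A \<longrightarrow> regular ar (equiv_O_class ar Ob A))"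
proof
  define RR where "RR = (\<lambda>(A, a). rooted_residual ar Ob A a) ` {(A, a). rooted_forest ar A a}"
  have finRR: "finite RR" using assms(2) unfolding regular_def RR_def .
  have inRR: "rooted_residual ar Ob A a \<in> RR" if "rooted_forest ar A a" for A a
    unfolding RR_def using that by blast
  show "finite (equiv_O_class ar Ob ` {A. forest ar A})"
  proof -
    define fresh where "fresh = (\<lambda>B::'r struct. SOME x. x \<notin> verts B)"
    define \<Phi> where "\<Phi> = (\<lambda>S. {B. forest ar B \<and> (extv B (fresh B), fresh B) \<in> S})"
    have fr: "fresh B \<notin> verts B" if "forest ar B" for B
    proof -
      have "finite (verts B)" using that unfolding forest_def wf_struct_def by blast
      then have "\<exists>x. x \<notin> verts B" using ex_new_if_finite[OF infinite_UNIV_nat] by blast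
      then show ?thesis unfolding fresh_def by (rule someI_ex)
    qed
    have res1: "residual ar Ob A = \<Phi> (rooted_residual ar Ob A a)" if A: "forest ar A" "a \<in> verts A" for A a
    proof (rule set_eqI)
      fix B
      show "B \<in> residual ar Ob A \<longleftrightarrow> B \<in> \<Phi> (rooted_residual ar Ob A a)"
      proof (cases "forest ar B")
        case False then show ?thesis unfolding residual_def \<Phi>_def by simp
      next
        case True
        have "wf_struct ar B" using True unfolding forest_def by blast
        then have e: "glue A a (extv B (fresh B)) (fresh B) = dunion A B"
          using glue_ext[OF A(2) _ fr[OF True]] by blast
        have r: "rooted_forest ar (extv B (fresh B)) (fresh B)"
          using forest_ext[OF True] unfolding rooted_forest_def extv_def by simp
        show ?thesis unfolding residual_def \<Phi>_def rooted_residual_def using True e r by simp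
      qed
    qed
    define E where "E = {A::'r struct. wf_struct ar A \<and> verts A = {}}"
    have finE: "finite E"
    proof -
      have "E \<subseteq> (\<lambda>P. \<lparr>verts = {}, rels = (\<lambda>R. if P R then {[]} else {})\<rparr>) ` UNIV"
      proof
        fix A assume "A \<in> E"
        then have w: "wf_struct ar A" "verts A = {}" unfolding E_def by auto
        have s: "rels A R \<subseteq> {[]}" for R using w unfolding wf_struct_def by auto
        have "rels A R = (if [] \<in> rels A R then {[]} else {})" for R using s[of R] by auto
        then have "rels A = (\<lambda>R. if [] \<in> rels A R then {[]} else {})" by (rule ext)
        then have "A = \<lparr>verts = {}, rels = (\<lambda>R. if [] \<in> rels A R then {[]} else {})\<rparr>"
          using w(2) by (cases A) simp
        then show "A \<in> (\<lambda>P. \<lparr>verts = {}, rels = (\<lambda>R. if P R then {[]} else {})\<rparr>) ` UNIV"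
          by (rule image_eqI[where x = "\<lambda>R. [] \<in> rels A R"]) simp
      qed
      then show ?thesis by (rule finite_subset) simp
    qed
    have sub1: "residual ar Ob ` {A. forest ar A} \<subseteq> \<Phi> ` RR \<union> residual ar Ob ` E"
    proof
      fix X assume "X \<in> residual ar Ob ` {A. forest ar A}"
      then obtain A where A: "forest ar A" "X = residual ar Ob A" by blast
      show "X \<in> \<Phi> ` RR \<union> residual ar Ob ` E"
      proof (cases "verts A = {}")
        case True
        then have "A \<in> E" using A(1) unfolding E_def forest_def by blast
        then show ?thesis using A(2) by blast
      next
        case False
        then obtain a where a: "a \<in> verts A" by blast
        then have "X = \<Phi> (rooted_residual ar Ob A a)" using res1[OF A(1) a] A(2) by simp
        moreover have "rooted_residual ar Ob A a \<in> RR" using inRR A(1) a unfolding rooted_forest_def by blast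
        ultimately show ?thesis by blast
      qed
    qed
    have finRes: "finite (residual ar Ob ` {A. forest ar A})"
      using finite_subset[OF sub1] finRR finE by blast
    have "equiv_O_class ar Ob ` {A. forest ar A} \<subseteq>
        (\<lambda>S. {A'. forest ar A' \<and> S = residual ar Ob A'}) ` (residual ar Ob ` {A. forest ar A})"
      unfolding equiv_O_class_def equiv_O_def by auto
    then show ?thesis using finRes by (meson finite_imageI finite_subset)
  qed
  show "\<forall>A. forest ar A \<longrightarrow> regular ar (equiv_O_class ar Ob A)"
  proof (intro allI impI)
    fix A0 assume A0: "forest ar A0"
    let ?C = "equiv_O_class ar Ob A0"
    let ?r0 = "residual ar Ob A0"
    define T where "T = (\<lambda>Bb. {X \<in> RR. Bb \<in> X})"
    define \<Theta> where "\<Theta> = (\<lambda>\<U>. {(B,b). rooted_forest ar B b \<and> T (B,b) \<in> \<U>})"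
    have key: "rooted_residual ar ?C A a \<in> \<Theta> ` Pow (Pow RR)" if Aa: "rooted_forest ar A a" for A a
    proof -
      have fA: "forest ar A" "a \<in> verts A" using Aa unfolding rooted_forest_def by auto
      define Q where "Q = (\<lambda>D. rooted_residual ar Ob (dunion A D) (2*a))"
      have QRR: "Q D \<in> RR" if "forest ar D" for D
      proof -
        have "rooted_forest ar (dunion A D) (2*a)"
          using forest_dunion[OF fA that] fA(2) unfolding rooted_forest_def verts_dunion by blast
        then show ?thesis unfolding Q_def by (rule inRR)
      qed
      define U where "U = {V. V \<subseteq> RR \<and> {D. forest ar D \<and> Q D \<in> V} = ?r0}"
      have "rooted_residual ar ?C A a = \<Theta> U"
      proof (rule set_eqI)
        fix p :: "'r struct \<times> nat"
        obtain B b where p: "p = (B,b)" by (cases p)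
        show "p \<in> rooted_residual ar ?C A a \<longleftrightarrow> p \<in> \<Theta> U"
        proof (cases "rooted_forest ar B b")
          case False then show ?thesis unfolding p rooted_residual_def \<Theta>_def by simp
        next
          case True
          have fB: "forest ar B" using True unfolding rooted_forest_def by blast
          have fg: "forest ar (glue A a B b)" using forest_glue[OF fA(1) fB] .
          have resg: "residual ar Ob (glue A a B b) = {D. forest ar D \<and> Q D \<in> T (B,b)}"
          proof (rule set_eqI)
            fix D
            show "D \<in> residual ar Ob (glue A a B b) \<longleftrightarrow> D \<in> {D. forest ar D \<and> Q D \<in> T (B,b)}"
            proof (cases "forest ar D")
              case False then show ?thesis unfolding residual_def by simp
            next
              case fD: True
              have "D \<in> residual ar Ob (glue A a B b) \<longleftrightarrow> glue (dunion A D) (2*a) B b \<in> Ob"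
                unfolding residual_def using fD swap_Ob[OF assms(1) fA(1) fB fD] by simp
              also have "\<dots> \<longleftrightarrow> (B,b) \<in> Q D" unfolding Q_def rooted_residual_def using True by simp
              also have "\<dots> \<longleftrightarrow> Q D \<in> T (B,b)" unfolding T_def using QRR[OF fD] by simp
              finally show ?thesis using fD by simp
            qed
          qed
          have "p \<in> rooted_residual ar ?C A a \<longleftrightarrow> ?r0 = {D. forest ar D \<and> Q D \<in> T (B,b)}"
            unfolding p rooted_residual_def equiv_O_class_def equiv_O_def using True fg resg by simp
          also have "\<dots> \<longleftrightarrow> T (B,b) \<in> U" unfolding U_def T_def by auto
          also have "\<dots> \<longleftrightarrow> p \<in> \<Theta> U" unfolding p \<Theta>_def using True by simp
          finally show ?thesis .
        qed
      qed
      moreover have "U \<in> Pow (Pow RR)" unfolding U_def by blast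
      ultimately show ?thesis by blast
    qed
    have "(\<lambda>(A, a). rooted_residual ar ?C A a) ` {(A, a). rooted_forest ar A a} \<subseteq> \<Theta> ` Pow (Pow RR)"
      using key by auto
    moreover have "finite (\<Theta> ` Pow (Pow RR))" using finRR by simp
    ultimately show "regular ar ?C" unfolding regular_def by (rule finite_subset)
  qed
qed


end
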